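(* Let $E$ be a nonzero real Banach space and $f\colon E\to\,]{-}\infty,\infty]$ be proper, convex and lower semicontinuous. Then $G((\partial f)^{\mathbb F})\subset G(\partial(f^* ))$, i.e. if $(y^*,y^{**})\in G((\partial f)^{\mathbb F})$ then $f^*(y^* )+f^{**}(y^{**})=\langle y^*,y^{**}\rangle$.
   Context: $f^*(x^* )=\sup_{x\in E}[\langle x,x^*\rangle-f(x)]$, $f^{**}(x^{**})=\sup_{x^*\in E^*}[\langle x^*,x^{**}\rangle-f^*(x^* )]$; $x^*\in\partial f(x)$ iff $f(x)+f^*(x^* )=\langle x,x^*\rangle$ ($\partial f$ is closed, monotone and quasidense). For a multifunction $S\colon E\rightrightarrows E^*$ with nonempty graph: closed means $G(S)$ norm-closed; monotone means $\langle s-t,s^*-t^*\rangle\ge0$ on $G(S)$; quasidense means for every $(x,x^* )$, $\inf_{(s,s^* )\in G(S)}[\tfrac12\|s-x\|^2+\tfrac12\|s^*-x^*\|^2+\langle s-x,s^*-x^*\rangle]\le0$. Let $\varphi_S(x,x^* )=\sup_{(s,s^* )\in G(S)}[\langle s,x^*\rangle+\langle x,s^*\rangle-\langle s,s^*\rangle]$ and $\varphi_S^*$ its conjugate on $E^*\times E^{**}$ under $\langle (x,x^* ),(y^*,y^{**})\rangle=\langle x,y^*\rangle+\langle x^*,y^{**}\rangle$. For $S$ closed, monotone, quasidense, $S^{\mathbb F}\colon E^*\rightrightarrows E^{**}$ is given by $(y^*,y^{**})\in G(S^{\mathbb F})$ iff $\varphi_S^*(y^*,y^{**})=\langle y^*,y^{**}\rangle$.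 *)

theory Defs
  imports "HOL-Analysis.Analysis"
begin

text \<open>E is a real Banach space (type class banach); its dual E* is the space of
bounded linear functionals (blinfun), and E** = (E*)*. The pairing
of x and x* is x* x (blinfun_apply).\<close>

definition proper_fn :: "('a \<Rightarrow> ereal) \<Rightarrow> bool" where
  "proper_fn f \<longleftrightarrow> (\<forall>x. f x \<noteq> -\<infinity>) \<and> (\<exists>x. f x \<noteq> \<infinity>)"

definition convex_fn :: "('a::real_vector \<Rightarrow> ereal) \<Rightarrow> bool" where
  "convex_fn f \<longleftrightarrow> (\<forall>x y (t::real). 0 < t \<and> t < 1 \<longrightarrow>
      f ((1 - t) *\<^sub>R x + t *\<^sub>R y) \<le> ereal (1 - t) * f x + ereal t * f y)"

definition lsc_fn :: "('a::topological_space \<Rightarrow> ereal) \<Rightarrow> bool" where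
  "lsc_fn f \<longleftrightarrow> (\<forall>c::real. closed {x. f x \<le> ereal c})"

definition fconj :: "('a::real_normed_vector \<Rightarrow> ereal) \<Rightarrow> ('a \<Rightarrow>\<^sub>L real) \<Rightarrow> ereal" where
  "fconj f xs = (SUP x. ereal (blinfun_apply xs x) - f x)"

definition subdiff_graph :: "('a::real_normed_vector \<Rightarrow> ereal) \<Rightarrow> ('a \<times> ('a \<Rightarrow>\<^sub>L real)) set" where
  "subdiff_graph f = {(x, xs). f x \<noteq> \<infinity> \<and>
       (\<forall>y. f x + ereal (blinfun_apply xs (y - x)) \<le> f y)}"

definition phi_fn :: "('a::real_normed_vector \<times> ('a \<Rightarrow>\<^sub>L real)) set \<Rightarrow> 'a \<times> ('a \<Rightarrow>\<^sub>L real) \<Rightarrow> ereal" where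
  "phi_fn G = (\<lambda>(x, xs). SUP p\<in>G. ereal (blinfun_apply xs (fst p) + blinfun_apply (snd p) x
                                        - blinfun_apply (snd p) (fst p)))"

definition phi_conj :: "('a::real_normed_vector \<times> ('a \<Rightarrow>\<^sub>L real)) set
    \<Rightarrow> ('a \<Rightarrow>\<^sub>L real) \<times> (('a \<Rightarrow>\<^sub>L real) \<Rightarrow>\<^sub>L real) \<Rightarrow> ereal" where
  "phi_conj G = (\<lambda>(ys, yss). SUP p. ereal (blinfun_apply ys (fst p) + blinfun_apply yss (snd p))
                                      - phi_fn G p)"

definition SF_graph :: "('a::real_normed_vector \<times> ('a \<Rightarrow>\<^sub>L real)) set
    \<Rightarrow> (('a \<Rightarrow>\<^sub>L real) \<times> (('a \<Rightarrow>\<^sub>L real) \<Rightarrow>\<^sub>L real)) set" where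
  "SF_graph G = {(ys, yss). phi_conj G (ys, yss) = ereal (blinfun_apply yss ys)}"

end

theory Submission
  imports Defs
begin

theorem lemma3p3:
  fixes f :: "'a::banach \<Rightarrow> ereal"
  assumes "\<exists>x::'a. x \<noteq> 0"
    and "proper_fn f" and "convex_fn f" and "lsc_fn f"
    and "(ys, yss) \<in> SF_graph (subdiff_graph f)"
  shows "fconj f ys + fconj (fconj f) yss = ereal (blinfun_apply yss ys)"
proof -
  define G where "G = subdiff_graph f"
  define c where "c = blinfun_apply yss ys"
  have PC: "phi_conj G (ys, yss) = ereal c"
    using assms(5) unfolding G_def c_def SF_graph_def by auto
  have nm: "\<And>x. f x \<noteq> -\<infinity>" using assms(2) unfolding proper_fn_def by auto
  have Gne: "G \<noteq> {}"
  proof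
    assume "G = {}"
    hence "\<And>p. phi_fn G p = -\<infinity>" unfolding phi_fn_def by (auto simp: bot_ereal_def)
    hence "phi_conj G (ys, yss) = \<infinity>" unfolding phi_conj_def by (simp add: top_ereal_def)
    thus False using PC by simp
  qed
  then obtain s ss where sG: "(s, ss) \<in> G" by auto
  hence fsi: "f s \<noteq> \<infinity>" and sub: "\<And>y. f s + ereal (blinfun_apply ss (y - s)) \<le> f y"
    unfolding G_def subdiff_graph_def by auto
  obtain fs where fs: "f s = ereal fs" using fsi nm[of s] by (cases "f s") auto
  have conj_lb: "\<And>xs x. ereal (blinfun_apply xs x) - f x \<le> fconj f xs"
    unfolding fconj_def by (rule SUP_upper) simp
  have conj_nm: "\<And>xs. fconj f xs \<noteq> -\<infinity>"
  proof -
    fix xs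
    have "ereal (blinfun_apply xs s - fs) \<le> fconj f xs" using conj_lb[of xs s] fs by simp
    thus "fconj f xs \<noteq> -\<infinity>" by auto
  qed
  have phib: "\<And>x xs. phi_fn G (x, xs) \<le> f x + fconj f xs"
  proof -
    fix x xs
    show "phi_fn G (x, xs) \<le> f x + fconj f xs"
      unfolding phi_fn_def split
    proof (rule SUP_least)
      fix p assume "p \<in> G"
      then obtain t ts where p: "p = (t, ts)" and fti: "f t \<noteq> \<infinity>"
        and subt: "f t + ereal (blinfun_apply ts (x - t)) \<le> f x"
        unfolding G_def subdiff_graph_def by auto
      obtain ft where ft: "f t = ereal ft" using fti nm[of t] by (cases "f t") auto
      have cl: "ereal (blinfun_apply xs t - ft) \<le> fconj f xs" using conj_lb[of xs t] ft by simp
      show "ereal (blinfun_apply xs (fst p) + blinfun_apply (snd p) x - blinfun_apply (snd p) (fst p))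
              \<le> f x + fconj f xs"
      proof (cases "f x")
        case (real u)
        show ?thesis
        proof (cases "fconj f xs")
          case (real v)
          have "ft + blinfun_apply ts (x - t) \<le> u" using subt ft real(1) `f x = ereal u` by simp
          moreover have "blinfun_apply xs t - ft \<le> v" using cl real by simp
          ultimately show ?thesis using p `f x = ereal u` real by (simp add: blinfun.diff_right)
        next
          case PInf thus ?thesis using `f x = ereal u` by simp
        next
          case MInf thus ?thesis using conj_nm by simp
        qed
      next
        case PInf thus ?thesis by simp
      next
        case MInf thus ?thesis using nm by simp
      qed
    qed
  qed
  have key: "\<And>x xs u v. f x = ereal u \<Longrightarrow> fconj f xs = ereal v \<Longrightarrow>
      blinfun_apply ys x - u + (blinfun_apply yss xs - v) \<le> c"
  proof -
    fix x xs u v assume u: "f x = ereal u" and v: "fconj f xs = ereal v"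
    have "ereal (blinfun_apply ys (fst (x, xs)) + blinfun_apply yss (snd (x, xs))) - phi_fn G (x, xs)
          \<le> phi_conj G (ys, yss)"
      unfolding phi_conj_def split by (rule SUP_upper) simp
    hence le: "ereal (blinfun_apply ys x + blinfun_apply yss xs) - phi_fn G (x, xs) \<le> ereal c"
      using PC by simp
    have pb: "phi_fn G (x, xs) \<le> ereal (u + v)" using phib[of x xs] u v by simp
    show "blinfun_apply ys x - u + (blinfun_apply yss xs - v) \<le> c"
    proof (cases "phi_fn G (x, xs)")
      case (real w) thus ?thesis using le pb by simp
    next
      case PInf thus ?thesis using pb by simp
    next
      case MInf thus ?thesis using le by simp
    qed
  qed
  have fss: "fconj f ss \<le> ereal (blinfun_apply ss s - fs)"
    unfolding fconj_def
  proof (rule SUP_least)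
    fix y
    show "ereal (blinfun_apply ss y) - f y \<le> ereal (blinfun_apply ss s - fs)"
    proof (cases "f y")
      case (real w)
      have "fs + blinfun_apply ss (y - s) \<le> w" using sub[of y] fs real by simp
      thus ?thesis using real by (simp add: blinfun.diff_right)
    qed (use nm in auto)
  qed
  obtain v0 where v0: "fconj f ss = ereal v0" using fss conj_nm[of ss] by (cases "fconj f ss") auto
  have A_ub: "fconj f ys \<le> ereal (c - (blinfun_apply yss ss - v0))"
    unfolding fconj_def
  proof (rule SUP_least)
    fix x
    show "ereal (blinfun_apply ys x) - f x \<le> ereal (c - (blinfun_apply yss ss - v0))"
    proof (cases "f x")
      case (real u)
      thus ?thesis using key[OF real v0] by simp
    qed (use nm in auto)
  qed
  obtain a where a: "fconj f ys = ereal a" using A_ub conj_nm[of ys] by (cases "fconj f ys") auto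
  have B_ub: "fconj (fconj f) yss \<le> ereal (c - (blinfun_apply ys s - fs))"
    unfolding fconj_def[of "fconj f"]
  proof (rule SUP_least)
    fix xs
    show "ereal (blinfun_apply yss xs) - fconj f xs \<le> ereal (c - (blinfun_apply ys s - fs))"
    proof (cases "fconj f xs")
      case (real v)
      thus ?thesis using key[OF fs real] by simp
    qed (use conj_nm in auto)
  qed
  have B_lb: "ereal (blinfun_apply yss ss) - fconj f ss \<le> fconj (fconj f) yss"
    unfolding fconj_def[of "fconj f"] by (rule SUP_upper) simp
  obtain b where b: "fconj (fconj f) yss = ereal b" using B_ub B_lb v0
    by (cases "fconj (fconj f) yss") auto
  have ab_le: "a + b \<le> c"
  proof (rule ccontr)
    assume "\<not> a + b \<le> c"
    define e where "e = (a + b - c) / 2"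
    have e: "e > 0" using `\<not> a + b \<le> c` unfolding e_def by simp
    have "ereal (a - e) < fconj f ys" using a e by simp
    then obtain x where x: "ereal (a - e) < ereal (blinfun_apply ys x) - f x"
      unfolding fconj_def by (auto simp: less_SUP_iff)
    obtain u where u: "f x = ereal u" using x nm[of x] by (cases "f x") auto
    have "ereal (b - e) < fconj (fconj f) yss" using b e by simp
    then obtain xs where xs: "ereal (b - e) < ereal (blinfun_apply yss xs) - fconj f xs"
      unfolding fconj_def[of "fconj f"] by (auto simp: less_SUP_iff)
    obtain v where v: "fconj f xs = ereal v" using xs conj_nm[of xs] by (cases "fconj f xs") auto
    have "blinfun_apply ys x - u + (blinfun_apply yss xs - v) \<le> c" using key[OF u v] .
    moreover have "a - e < blinfun_apply ys x - u" using x u by simp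
    moreover have "b - e < blinfun_apply yss xs - v" using xs v by simp
    moreover have "2 * e = a + b - c" unfolding e_def by simp
    ultimately show False by linarith
  qed
  have "ereal (blinfun_apply yss ys) - fconj f ys \<le> fconj (fconj f) yss"
    unfolding fconj_def[of "fconj f"] by (rule SUP_upper) simp
  hence "c - a \<le> b" using a b unfolding c_def by simp
  hence "a + b = c" using ab_le by simp
  thus ?thesis using a b unfolding c_def by simp
qed

end
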